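(* Let $L\ge 1$ and let $G=\mathbb{Z}_L^2=(V,E)$ be the $L\times L$ square lattice with periodic boundary conditions (the discrete torus), with $m=|E|=2L^2$ edges. Let $A\subseteq E$ be a random bond configuration of bond percolation with parameter $p=1/2$, i.e. each edge is included in $A$ independently with probability $1/2$. For the loop configuration associated with $A$ (defined in the context), let $N_1(A)$ be the number of edges $e\in A$ whose two associated loop segments belong to the same loop, and $N_2(A)$ the number of edges $e\in A$ whose two associated loop segments belong to distinct loops. Set $\mathcal{L}_1=N_1(A)/m$ and $\mathcal{L}_2=N_2(A)/m$. Then for every $L$, $$\mathbb{E}\,\mathcal{L}_1=\mathbb{E}\,\mathcal{L}_2=\tfrac14 .$$
   Context: Loop (Baxter–Kelland–Wu) configuration: the medial graph of $G$ (embedded on the torus) has one vertex $v_e$ at the midpoint of each edge $e\in E$, and a medial edge joining $v_e$ and $v_{e'}$ whenever $e,e'$ are consecutive edges on the boundary of a common face $f$ and share an endpoint $x$. Thus the four medial edges at $v_e$ are indexed by pairs $(x,f)$ with $x$ an endpoint of $e$ and $f$ one of the two faces adjacent to $e$. Given $A\subseteq E$, at each $v_e$ the four incident medial edges are paired into two non-crossing arcs: if $e\in A$ (occupied), $(x,f)$ is paired with $(y,f)$ for each adjacent face $f$ (where $x,y$ are the endpoints of $e$), so the arcs run alongside $e$ on either side without crossing it; if $e\notin A$, $(x,f)$ is paired with $(x,f')$ for each endpoint $x$ (where $f,f'$ are the two faces adjacent to $e$), so the arcs cross $e$. Following these pairings decomposes the medial edges into disjoint closed curves, the loops. For an occupied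 edge $e\in A$, its two associated loop segments are the two arcs at $v_e$ running alongside $e$ (one on each side). *)

theory Defs
  imports "HOL-Probability.Probability"
begin

text \<open>Edges are pairs (v,d): (v,H) joins v to v+(1,0), (v,V) joins v to v+(0,1).
  This gives exactly 2L^2 edges, also for L = 1, 2 (multigraph case).
  Faces are indexed by their lower-left corner v (the square v, v+(1,0), v+(1,1), v+(0,1)).
  Medial edges (corners) are pairs (f,c): face f and a corner position c of that face;
  the corner joins the two boundary edges of f meeting at that corner.\<close>

datatype dir = H | V
datatype pos = SW | SE | NE | NW

type_synonym vtx = "nat \<times> nat"
type_synonym edge = "vtx \<times> dir"
type_synonym corner = "vtx \<times> pos"

definition torus_vertices :: "nat \<Rightarrow> vtx set" where
  "torus_vertices L = {(i, j). i < L \<and> j < L}"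

definition torus_edges :: "nat \<Rightarrow> edge set" where
  "torus_edges L = torus_vertices L \<times> UNIV"

definition shift_down :: "nat \<Rightarrow> vtx \<Rightarrow> vtx" where
  "shift_down L v = (fst v, (snd v + L - 1) mod L)"

definition shift_left :: "nat \<Rightarrow> vtx \<Rightarrow> vtx" where
  "shift_left L v = ((fst v + L - 1) mod L, snd v)"

text \<open>The two arcs at the medial vertex of edge e, given configuration A.
  Horizontal e = (v,H), endpoints x = v, y = v+(1,0); face above is v (e is its bottom,
  corners (x,above) = (v,SW), (y,above) = (v,SE)); face below is v-(0,1) (e is its top,
  corners (x,below) = (v-(0,1),NW), (y,below) = (v-(0,1),NE)).
  Vertical e = (v,V), endpoints x = v, y = v+(0,1); face right is v (e is its left side,
  corners (v,SW), (v,NW)); face left is v-(1,0) (e is its right side, corners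
  (v-(1,0),SE), (v-(1,0),NE)).
  Occupied: pair (x,f) with (y,f); unoccupied: pair (x,f) with (x,f').\<close>

definition arcs :: "nat \<Rightarrow> edge set \<Rightarrow> edge \<Rightarrow> (corner \<times> corner) set" where
  "arcs L A e = (case e of
     (v, H) \<Rightarrow> (let w = shift_down L v in
        if e \<in> A then {((v, SW), (v, SE)), ((w, NW), (w, NE))}
        else {((v, SW), (w, NW)), ((v, SE), (w, NE))})
   | (v, V) \<Rightarrow> (let w = shift_left L v in
        if e \<in> A then {((v, SW), (v, NW)), ((w, SE), (w, NE))}
        else {((v, SW), (w, SE)), ((v, NW), (w, NE))}))"

definition pairing :: "nat \<Rightarrow> edge set \<Rightarrow> (corner \<times> corner) set" where
  "pairing L A = (\<Union>e\<in>torus_edges L. arcs L A e)"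

definition same_loop :: "nat \<Rightarrow> edge set \<Rightarrow> corner \<Rightarrow> corner \<Rightarrow> bool" where
  "same_loop L A c c' \<longleftrightarrow> (c, c') \<in> (pairing L A \<union> (pairing L A)\<inverse>)\<^sup>*"

text \<open>The two loop segments associated with an occupied edge: one representative medial edge
  from each of the two arcs running alongside e.\<close>
definition seg1 :: "nat \<Rightarrow> edge \<Rightarrow> corner" where
  "seg1 L e = (fst e, SW)"

definition seg2 :: "nat \<Rightarrow> edge \<Rightarrow> corner" where
  "seg2 L e = (case e of (v, H) \<Rightarrow> (shift_down L v, NW) | (v, V) \<Rightarrow> (shift_left L v, SE))"

definition N1 :: "nat \<Rightarrow> edge set \<Rightarrow> nat" where
  "N1 L A = card {e \<in> A. same_loop L A (seg1 L e) (seg2 L e)}"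

definition N2 :: "nat \<Rightarrow> edge set \<Rightarrow> nat" where
  "N2 L A = card {e \<in> A. \<not> same_loop L A (seg1 L e) (seg2 L e)}"

definition perc_half :: "nat \<Rightarrow> edge set pmf" where
  "perc_half L = pmf_of_set (Pow (torus_edges L))"

end

theory Submission
  imports Defs
begin


definition reach :: "('a \<Rightarrow> 'a) \<Rightarrow> 'a \<Rightarrow> 'a \<Rightarrow> bool" where
  "reach f x y \<longleftrightarrow> (\<exists>n. (f^^n) x = y)"

lemma reach_refl: "reach f x x" unfolding reach_def by (metis funpow_0)
lemma reach_step: "reach f x (f x)" unfolding reach_def by (rule exI[of _ 1]) simp
lemma reach_trans: "reach f x y \<Longrightarrow> reach f y z \<Longrightarrow> reach f x z"
proof -
  assume "reach f x y" "reach f y z"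
  then obtain m n where "(f^^m) x = y" "(f^^n) y = z" unfolding reach_def by blast
  then have "(f^^(n+m)) x = z" by (simp add: funpow_add)
  then show ?thesis unfolding reach_def by blast
qed
lemma reach_stepr: "reach f x y \<Longrightarrow> reach f x (f y)"
  by (meson reach_step reach_trans)
lemma reach_stepl: "reach f (f x) y \<Longrightarrow> reach f x y"
  by (meson reach_step reach_trans)

lemma funpow_in: assumes "\<forall>x\<in>C. f x \<in> C" "x \<in> C" shows "(f^^n) x \<in> C"
  using assms by (induction n) auto

lemma funpow_cancel: assumes "\<forall>x\<in>C. f x \<in> C" "inj_on f C" "a \<in> C" "b \<in> C"
  "(f^^n) a = (f^^n) b" shows "a = b"
  using assms(3-5)
proof (induction n arbitrary: a b)
  case 0 then show ?case by simp
next
  case (Suc n)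
  have "(f^^n) (f a) = (f^^n) (f b)" using Suc.prems(3) by (simp add: funpow_Suc_right del: funpow.simps)
  then have "f a = f b" using Suc.IH assms(1) Suc.prems by blast
  then show ?case using assms(2) Suc.prems by (meson inj_onD)
qed

lemma period: assumes fin: "finite C" and maps: "\<forall>x\<in>C. f x \<in> C" and inj: "inj_on f C"
  and x: "x \<in> C" shows "reach f (f x) x"
proof -
  let ?g = "\<lambda>n. (f^^n) x"
  have "?g ` {..card C} \<subseteq> C" using funpow_in[OF maps x] by auto
  then have "card (?g ` {..card C}) \<le> card C" by (simp add: card_mono fin)
  then have "\<not> inj_on ?g {..card C}" by (intro pigeonhole) simp
  then obtain i j where ij: "i \<le> card C" "j \<le> card C" "i \<noteq> j" "?g i = ?g j"
    unfolding inj_on_def by auto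
  have "\<exists>i j. i < j \<and> ?g i = ?g j"
  proof (cases "i < j")
    case True then show ?thesis using ij by blast
  next
    case False then have "j < i" using ij(3) by simp
    then show ?thesis using ij(4) by metis
  qed
  then obtain i j where ij: "i < j" "?g i = ?g j" by blast
  then obtain k where k: "j = i + Suc k" using less_imp_Suc_add by fastforce
  have e: "(f^^(i + Suc k)) x = (f^^i) ((f^^Suc k) x)" by (simp only: funpow_add comp_apply)
  have "(f^^i) x = (f^^(i + Suc k)) x" using ij(2) k by simp
  then have "(f^^i) x = (f^^i) ((f^^Suc k) x)" using e by simp
  then have "x = (f^^Suc k) x" using funpow_cancel[OF maps inj x funpow_in[OF maps x]] by blast
  then have "(f^^k) (f x) = x" by (simp add: funpow_Suc_right del: funpow.simps)
  then show ?thesis unfolding reach_def by blast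
qed

lemma reach_sym: assumes fin: "finite C" and maps: "\<forall>x\<in>C. f x \<in> C" and inj: "inj_on f C"
  and x: "x \<in> C" and r: "reach f x y" shows "reach f y x"
proof -
  obtain n where n: "(f^^n) x = y" using r unfolding reach_def by blast
  have "reach f ((f^^n) x) x" for n
  proof (induction n)
    case 0 then show ?case by (simp add: reach_refl)
  next
    case (Suc n)
    have h: "reach f (f ((f^^n) x)) ((f^^n) x)" using period[OF fin maps inj funpow_in[OF maps x]] .
    show ?case using reach_trans[OF h Suc.IH] by simp
  qed
  then show ?thesis using n by blast
qed

lemma reach_in: assumes "\<forall>x\<in>C. f x \<in> C" "x \<in> C" "reach f x y" shows "y \<in> C"
proof -
  obtain n where "(f^^n) x = y" using assms(3) unfolding reach_def by blast
  then show ?thesis using funpow_in[OF assms(1,2), of n] by simp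
qed

lemma reach_succ_iff: assumes fin: "finite C" and maps: "\<forall>x\<in>C. f x \<in> C" and inj: "inj_on f C"
  and x: "x \<in> C" and y: "y \<in> C" shows "reach f (f x) (f y) \<longleftrightarrow> reach f x y"
proof
  assume "reach f (f x) (f y)"
  then have "reach f x (f y)" by (rule reach_stepl)
  moreover have "reach f (f y) y" using period[OF fin maps inj y] .
  ultimately show "reach f x y" by (rule reach_trans)
next
  assume "reach f x y"
  then have h1: "reach f x (f y)" by (rule reach_stepr)
  have h2: "reach f (f x) x" using period[OF fin maps inj x] .
  show "reach f (f x) (f y)" using reach_trans[OF h2 h1] .
qed

lemma rtrancl_reach: assumes fin: "finite C" and maps: "\<forall>x\<in>C. f x \<in> C" and inj: "inj_on f C"
  and x: "x \<in> C"
  shows "(x, y) \<in> ({(p, f p) | p. p \<in> C} \<union> {(f p, p) | p. p \<in> C})\<^sup>* \<longleftrightarrow> reach f x y"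
proof
  assume "(x, y) \<in> ({(p, f p) | p. p \<in> C} \<union> {(f p, p) | p. p \<in> C})\<^sup>*"
  then show "reach f x y"
  proof (induction rule: rtrancl_induct)
    case base then show ?case by (simp add: reach_refl)
  next
    case (step y z)
    from step(2) have "(\<exists>p. p \<in> C \<and> y = p \<and> z = f p) \<or> (\<exists>p. p \<in> C \<and> y = f p \<and> z = p)" by auto
    then consider p where "p \<in> C" "y = p" "z = f p" | p where "p \<in> C" "y = f p" "z = p" by blast
    then show ?case
    proof cases
      case 1 then show ?thesis using step.IH reach_stepr[of f x y] by simp
    next
      case 2
      have "reach f (f p) p" using period[OF fin maps inj 2(1)] .
      then show ?thesis using step.IH 2 reach_trans[of f x y z] by simp
    qed
  qed
next
  assume "reach f x y"
  then obtain n where n: "(f^^n) x = y" unfolding reach_def by blast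
  have "(x, (f^^n) x) \<in> ({(p, f p) | p. p \<in> C} \<union> {(f p, p) | p. p \<in> C})\<^sup>*" for n
  proof (induction n)
    case 0 then show ?case by simp
  next
    case (Suc n)
    have "(f^^n) x \<in> C" using funpow_in[OF maps x] .
    then have "((f^^n) x, (f^^Suc n) x) \<in> ({(p, f p) | p. p \<in> C} \<union> {(f p, p) | p. p \<in> C})" by auto
    then show ?case using Suc by (meson rtrancl.rtrancl_into_rtrancl)
  qed
  then show "(x, y) \<in> ({(p, f p) | p. p \<in> C} \<union> {(f p, p) | p. p \<in> C})\<^sup>*" using n by blast
qed

lemma closed_funpow: "\<forall>z\<in>X. f z \<in> X \<Longrightarrow> x \<in> X \<Longrightarrow> (f^^n) x \<in> X"
  by (induction n) auto

lemma toggle_abs: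
  assumes fin: "finite C" and maps: "\<forall>x\<in>C. f x \<in> C" and inj: "inj_on f C"
  and b: "b \<in> C" and c: "c \<in> C" and bc: "b \<noteq> c"
  and agree: "\<forall>x\<in>C. x \<noteq> b \<longrightarrow> x \<noteq> c \<longrightarrow> g x = f x"
  and gb: "g b = f c" and gc: "g c = f b"
  shows "reach g b c \<longleftrightarrow> \<not> reach f b c"
proof -
  define P where "P i = (f^^i) (f c)" for i
  have fc: "f c \<in> C" using maps c by blast
  have PC: "P i \<in> C" for i unfolding P_def by (rule funpow_in[OF maps fc])
  obtain i0 where "P i0 = c" using period[OF fin maps inj c] unfolding reach_def P_def by blast
  then have ex: "\<exists>i. P i \<in> {b, c}" by blast
  define j where "j = (LEAST i. P i \<in> {b, c})"
  have Pj: "P j \<in> {b, c}" unfolding j_def using ex by (rule LeastI_ex)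
  have Pi: "i < j \<Longrightarrow> P i \<notin> {b, c}" for i unfolding j_def by (rule not_less_Least)
  have PS: "f (P i) = P (Suc i)" for i unfolding P_def by simp
  have agreeP: "i \<le> j \<Longrightarrow> (g^^i) (f c) = P i" for i
  proof (induction i)
    case 0 then show ?case by (simp add: P_def)
  next
    case (Suc i)
    then have "(g^^i) (f c) = P i" by simp
    moreover have "g (P i) = f (P i)" using Pi[of i] Suc.prems agree PC by auto
    ultimately show ?case using PS by simp
  qed
  show ?thesis
  proof (cases "P j = b")
    case True
    have "(f^^Suc j) c = b" using True unfolding P_def by (simp only: funpow_Suc_right comp_apply)
    then have "reach f c b" unfolding reach_def by blast
    then have rfbc: "reach f b c" using reach_sym[OF fin maps inj c] by blast
    define X where "X = P ` {..j}"
    have Xcl: "\<forall>z\<in>X. g z \<in> X"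
    proof
      fix z assume "z \<in> X"
      then obtain i where i: "i \<le> j" "z = P i" unfolding X_def by blast
      show "g z \<in> X"
      proof (cases "i < j")
        case True
        then have "g z = P (Suc i)" using i Pi[of i] agree PC PS by auto
        then show ?thesis unfolding X_def using True by auto
      next
        case False
        then have "z = b" using i True by auto
        then have "g z = P 0" using gb by (simp add: P_def)
        then show ?thesis unfolding X_def by auto
      qed
    qed
    have bX: "b \<in> X" unfolding X_def using True by auto
    have cX: "c \<notin> X"
    proof
      assume "c \<in> X"
      then obtain i where "i \<le> j" "c = P i" unfolding X_def by blast
      then show False using Pi[of i] True bc by (cases "i < j") auto
    qed
    have "\<not> reach g b c" unfolding reach_def
    proof
      assume "\<exists>n. (g^^n) b = c"
      then obtain n where "(g^^n) b = c" by blast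
      then show False using closed_funpow[OF Xcl bX, of n] cX by simp
    qed
    then show ?thesis using rfbc by blast
  next
    case False
    then have Pjc: "P j = c" using Pj by auto
    have "(g^^Suc j) b = c" using agreeP[of j] Pjc gb by (simp add: funpow_Suc_right del: funpow.simps)
    then have rg: "reach g b c" unfolding reach_def by blast
    have "\<not> reach f b c"
    proof
      assume "reach f b c"
      then have rcb: "reach f c b" using reach_sym[OF fin maps inj b] by blast
      define X where "X = P ` {..j}"
      have Xcl: "\<forall>z\<in>X. f z \<in> X"
      proof
        fix z assume "z \<in> X"
        then obtain i where i: "i \<le> j" "z = P i" unfolding X_def by blast
        show "f z \<in> X"
        proof (cases "i < j")
          case True
          then show ?thesis using i PS unfolding X_def by auto
        next
          case False
          then have "z = c" using i Pjc by auto
          then have "f z = P 0" by (simp add: P_def)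
          then show ?thesis unfolding X_def by auto
        qed
      qed
      have cX: "c \<in> X" unfolding X_def using Pjc by auto
      obtain n where "(f^^n) c = b" using rcb unfolding reach_def by blast
      then have "b \<in> X" using closed_funpow[OF Xcl cX, of n] by simp
      then obtain i where "i \<le> j" "b = P i" unfolding X_def by blast
      then show False using Pi[of i] Pjc bc by (cases "i < j") auto
    qed
    then show ?thesis using rg by blast
  qed
qed

lemma dual_abs:
  assumes fin: "finite C" and maps: "\<forall>x\<in>C. f x \<in> C" and inj: "inj_on f C"
  and pinj: "inj_on \<psi> C" and gd: "\<forall>p\<in>C. g (\<psi> (f p)) = \<psi> p"
  and x: "x \<in> C" and y: "y \<in> C"
  shows "reach g (\<psi> x) (\<psi> y) \<longleftrightarrow> reach f y x"
proof
  have surj: "f ` C = C" using endo_inj_surj[OF fin _ inj] maps by blast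
  assume "reach g (\<psi> x) (\<psi> y)"
  then obtain n where "(g^^n) (\<psi> x) = \<psi> y" unfolding reach_def by blast
  then show "reach f y x" using x
  proof (induction n arbitrary: x)
    case 0 then show ?case using pinj y by (simp add: inj_on_eq_iff reach_refl)
  next
    case (Suc n)
    obtain z where z: "z \<in> C" "x = f z" using surj Suc.prems(2) by blast
    have "g (\<psi> x) = \<psi> z" using gd z by simp
    then have "(g^^n) (\<psi> z) = \<psi> y" using Suc.prems(1) by (simp add: funpow_Suc_right del: funpow.simps)
    then have "reach f y z" using Suc.IH z by blast
    then show ?case using z(2) reach_stepr[of f y z] by simp
  qed
next
  assume "reach f y x"
  then obtain n where n: "(f^^n) y = x" unfolding reach_def by blast
  have "(g^^n) (\<psi> ((f^^n) z)) = \<psi> z" if "z \<in> C" for z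
    using that
  proof (induction n arbitrary: z)
    case 0 then show ?case by simp
  next
    case (Suc n)
    have "(g^^n) (\<psi> ((f^^n) (f z))) = \<psi> (f z)" using Suc maps by blast
    moreover have "(g^^Suc n) (\<psi> ((f^^Suc n) z)) = g ((g^^n) (\<psi> ((f^^n) (f z))))"
      by (simp add: funpow_swap1)
    ultimately show ?case using gd Suc.prems by simp
  qed
  then show "reach g (\<psi> x) (\<psi> y)" using n y unfolding reach_def by blast
qed




definition up :: "nat \<Rightarrow> vtx \<Rightarrow> vtx" where "up L v = (fst v, (snd v + 1) mod L)"
definition rt :: "nat \<Rightarrow> vtx \<Rightarrow> vtx" where "rt L v = ((fst v + 1) mod L, snd v)"
definition corners :: "nat \<Rightarrow> corner set" where "corners L = torus_vertices L \<times> UNIV"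

lemma m1: assumes "j < L" shows "Suc ((j + L - Suc 0) mod L) mod L = j"
proof (cases j)
  case 0
  then show ?thesis using assms by (cases L) auto
next
  case (Suc k)
  then have "(j + L - Suc 0) mod L = k" using assms by simp
  then show ?thesis using Suc assms by simp
qed

lemma m2: assumes j: "j < L" shows "(Suc j mod L + L - Suc 0) mod L = j"
proof (cases "Suc j = L")
  case True then show ?thesis using j by simp
next
  case False
  then have "Suc j mod L = Suc j" using j by simp
  then show ?thesis using j by simp
qed

lemmas coord = up_def rt_def shift_down_def shift_left_def torus_vertices_def corners_def torus_edges_def

fun succ :: "nat \<Rightarrow> edge set \<Rightarrow> corner \<Rightarrow> corner" where
  "succ L A (f, SE) = (if (f, H) \<in> A then (f, SW) else (shift_down L f, NE))"
| "succ L A (f, NW) = (if (up L f, H) \<in> A then (f, NE) else (up L f, SW))"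
| "succ L A (f, SW) = (if (f, V) \<in> A then (f, NW) else (shift_left L f, SE))"
| "succ L A (f, NE) = (if (rt L f, V) \<in> A then (f, SE) else (rt L f, NW))"

fun pred :: "nat \<Rightarrow> edge set \<Rightarrow> corner \<Rightarrow> corner" where
  "pred L A (f, SW) = (if (f, H) \<in> A then (f, SE) else (shift_down L f, NW))"
| "pred L A (f, NE) = (if (up L f, H) \<in> A then (f, NW) else (up L f, SE))"
| "pred L A (f, NW) = (if (f, V) \<in> A then (f, SW) else (shift_left L f, NE))"
| "pred L A (f, SE) = (if (rt L f, V) \<in> A then (f, NE) else (rt L f, SW))"

lemma succ_in: assumes "L \<ge> 1" "p \<in> corners L" shows "succ L A p \<in> corners L"
proof -
  obtain i j q where p: "p = ((i, j), q)" by (metis prod.exhaust)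
  show ?thesis using assms unfolding p by (cases q) (auto simp: coord)
qed

lemma pred_succ: assumes "L \<ge> 1" "p \<in> corners L" shows "pred L A (succ L A p) = p"
proof -
  obtain i j q where p: "p = ((i, j), q)" by (metis prod.exhaust)
  show ?thesis using assms unfolding p by (cases q) (auto simp: coord m1 m2)
qed

lemma succ_inj: "L \<ge> 1 \<Longrightarrow> inj_on (succ L A) (corners L)"
  by (metis inj_onI pred_succ)

lemma fin_corners: "finite (corners L)"
proof -
  have "torus_vertices L = {..<L} \<times> {..<L}" unfolding torus_vertices_def by auto
  moreover have "(UNIV :: pos set) = {SW, SE, NE, NW}" using pos.exhaust by auto
  then have "finite (UNIV :: pos set)" by (metis finite.emptyI finite_insert)
  ultimately show ?thesis unfolding corners_def by (simp add: finite_cartesian_product)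
qed

lemma fin_edges: "finite (torus_edges L)"
proof -
  have "torus_vertices L = {..<L} \<times> {..<L}" unfolding torus_vertices_def by auto
  moreover have "(UNIV :: dir set) = {H, V}" using dir.exhaust by auto
  then have "finite (UNIV :: dir set)" by (metis finite.emptyI finite_insert)
  ultimately show ?thesis unfolding torus_edges_def by (simp add: finite_cartesian_product)
qed




lemma arcs_succ: assumes L: "L \<ge> 1" and e: "e \<in> torus_edges L" and pq: "(p, q) \<in> arcs L A e"
  shows "(p \<in> corners L \<and> q = succ L A p) \<or> (q \<in> corners L \<and> p = succ L A q)"
proof -
  obtain i j d where ed: "e = ((i, j), d)" by (metis prod.exhaust)
  show ?thesis
  proof (cases d)
    case H
    then show ?thesis using assms unfolding ed arcs_def Let_def
      by (cases "((i, j), H) \<in> A") (auto simp: coord m1 m2)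
  next
    case V
    then show ?thesis using assms unfolding ed arcs_def Let_def
      by (cases "((i, j), V) \<in> A") (auto simp: coord m1 m2)
  qed
qed

lemma succ_arcs: assumes L: "L \<ge> 1" and p: "p \<in> corners L"
  shows "\<exists>e\<in>torus_edges L. (p, succ L A p) \<in> arcs L A e \<or> (succ L A p, p) \<in> arcs L A e"
proof -
  obtain i j q where pq: "p = ((i, j), q)" by (metis prod.exhaust)
  have ij: "i < L" "j < L" using p unfolding pq coord by auto
  show ?thesis
  proof (cases q)
    case SW
    show ?thesis
      by (rule bexI[of _ "((i, j), V)"]) (use ij L in \<open>auto simp: pq SW arcs_def Let_def coord m1 m2\<close>)
  next
    case SE
    show ?thesis
      by (rule bexI[of _ "((i, j), H)"]) (use ij L in \<open>auto simp: pq SE arcs_def Let_def coord m1 m2\<close>)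
  next
    case NE
    show ?thesis
      by (rule bexI[of _ "(rt L (i, j), V)"]) (use ij L in \<open>auto simp: pq NE arcs_def Let_def coord m1 m2\<close>)
  next
    case NW
    show ?thesis
      by (rule bexI[of _ "(up L (i, j), H)"]) (use ij L in \<open>auto simp: pq NW arcs_def Let_def coord m1 m2\<close>)
  qed
qed

lemma pair_eq: assumes L: "L \<ge> 1"
  shows "pairing L A \<union> (pairing L A)\<inverse> =
    {(p, succ L A p) | p. p \<in> corners L} \<union> {(succ L A p, p) | p. p \<in> corners L}"
proof
  show "pairing L A \<union> (pairing L A)\<inverse> \<subseteq>
    {(p, succ L A p) | p. p \<in> corners L} \<union> {(succ L A p, p) | p. p \<in> corners L}"
  proof
    fix x assume "x \<in> pairing L A \<union> (pairing L A)\<inverse>"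
    moreover obtain u w where uw: "x = (u, w)" by (cases x)
    ultimately have "(u, w) \<in> pairing L A \<or> (w, u) \<in> pairing L A" by auto
    then have "\<exists>p q e. (x = (p, q) \<or> x = (q, p)) \<and> e \<in> torus_edges L \<and> (p, q) \<in> arcs L A e"
      unfolding pairing_def uw by blast
    then obtain p q e where x: "x = (p, q) \<or> x = (q, p)" and e: "e \<in> torus_edges L" "(p, q) \<in> arcs L A e"
      by blast
    from arcs_succ[OF L e] x show "x \<in> {(p, succ L A p) | p. p \<in> corners L} \<union> {(succ L A p, p) | p. p \<in> corners L}"
      by blast
  qed
next
  show "{(p, succ L A p) | p. p \<in> corners L} \<union> {(succ L A p, p) | p. p \<in> corners L}
     \<subseteq> pairing L A \<union> (pairing L A)\<inverse>"
  proof
    fix x assume "x \<in> {(p, succ L A p) | p. p \<in> corners L} \<union> {(succ L A p, p) | p. p \<in> corners L}"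
    then obtain p where p: "p \<in> corners L" "x = (p, succ L A p) \<or> x = (succ L A p, p)" by blast
    from succ_arcs[OF L p(1), of A] obtain e where "e \<in> torus_edges L"
      "(p, succ L A p) \<in> arcs L A e \<or> (succ L A p, p) \<in> arcs L A e" by blast
    then have "(p, succ L A p) \<in> pairing L A \<or> (succ L A p, p) \<in> pairing L A"
      unfolding pairing_def by blast
    then show "x \<in> pairing L A \<union> (pairing L A)\<inverse>" using p(2) by blast
  qed
qed

lemma same_loop_reach: assumes L: "L \<ge> 1" and x: "x \<in> corners L"
  shows "same_loop L A x y \<longleftrightarrow> reach (succ L A) x y"
proof -
  have maps: "\<forall>x\<in>corners L. succ L A x \<in> corners L" using succ_in[OF L] by blast
  show ?thesis unfolding same_loop_def pair_eq[OF L]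
    using rtrancl_reach[OF fin_corners maps succ_inj[OF L] x] .
qed




fun hb :: "nat \<Rightarrow> edge \<Rightarrow> corner" where
  "hb L (v, H) = (v, SE)" | "hb L (v, V) = (v, SW)"
fun hc :: "nat \<Rightarrow> edge \<Rightarrow> corner" where
  "hc L (v, H) = (shift_down L v, NW)" | "hc L (v, V) = (shift_left L v, NE)"

definition S :: "nat \<Rightarrow> edge set \<Rightarrow> edge \<Rightarrow> bool" where
  "S L A e = reach (succ L A) (hb L e) (hc L e)"

lemma maps: "L \<ge> 1 \<Longrightarrow> \<forall>x\<in>corners L. succ L A x \<in> corners L" using succ_in by blast

lemma reach_sym_iff: assumes L: "L \<ge> 1" and x: "x \<in> corners L" and y: "y \<in> corners L"
  shows "reach (succ L A) x y \<longleftrightarrow> reach (succ L A) y x"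
  using reach_sym[OF fin_corners maps[OF L] succ_inj[OF L]] x y by blast

lemma hb_in: "L \<ge> 1 \<Longrightarrow> e \<in> torus_edges L \<Longrightarrow> hb L e \<in> corners L"
  by (cases e, cases "snd e") (auto simp: coord)
lemma hc_in: "L \<ge> 1 \<Longrightarrow> e \<in> torus_edges L \<Longrightarrow> hc L e \<in> corners L"
  by (cases e, cases "snd e") (auto simp: coord)
lemma hb_ne_hc: "hb L e \<noteq> hc L e"
  by (cases e, cases "snd e") auto

lemma agree: assumes L: "L \<ge> 1" and e: "e \<in> torus_edges L" and x: "x \<in> corners L"
  and xb: "x \<noteq> hb L e" and xc: "x \<noteq> hc L e"
  shows "succ L (insert e A) x = succ L A x"
proof -
  obtain i j q where xq: "x = ((i, j), q)" by (metis prod.exhaust)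
  obtain a b d where ed: "e = ((a, b), d)" by (metis prod.exhaust)
  have ij: "i < L" "j < L" "a < L" "b < L" using x e unfolding xq ed coord by auto
  show ?thesis
    using ij xb xc unfolding xq ed
    by (cases q; cases d) (auto simp: coord m1 m2)
qed

lemma gb: assumes L: "L \<ge> 1" and e: "e \<in> torus_edges L" and nA: "e \<notin> A"
  shows "succ L (insert e A) (hb L e) = succ L A (hc L e)"
    and "succ L (insert e A) (hc L e) = succ L A (hb L e)"
proof -
  obtain a b d where ed: "e = ((a, b), d)" by (metis prod.exhaust)
  have ij: "a < L" "b < L" using e unfolding ed coord by auto
  show "succ L (insert e A) (hb L e) = succ L A (hc L e)"
    using ij nA unfolding ed by (cases d) (auto simp: coord m1 m2)
  show "succ L (insert e A) (hc L e) = succ L A (hb L e)"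
    using ij nA unfolding ed by (cases d) (auto simp: coord m1 m2)
qed

lemma S_toggle: assumes L: "L \<ge> 1" and e: "e \<in> torus_edges L" and nA: "e \<notin> A"
  shows "S L (insert e A) e \<longleftrightarrow> \<not> S L A e"
  unfolding S_def
  apply (rule toggle_abs[OF fin_corners maps[OF L] succ_inj[OF L] hb_in[OF L e] hc_in[OF L e] hb_ne_hc])
  using agree[OF L e] gb[OF L e nA] by auto

lemma N_S: assumes L: "L \<ge> 1" and e: "e \<in> torus_edges L" and eA: "e \<in> A"
  shows "same_loop L A (seg1 L e) (seg2 L e) \<longleftrightarrow> S L A e"
proof -
  obtain a b d where ed: "e = ((a, b), d)" by (metis prod.exhaust)
  have ij: "a < L" "b < L" using e unfolding ed coord by auto
  have s1: "seg1 L e \<in> corners L" using ij unfolding ed seg1_def coord by auto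
  note fm = fin_corners maps[OF L] succ_inj[OF L]
  show ?thesis
  proof (cases d)
    case H
    have 1: "seg1 L e = succ L A (hb L e)" "seg2 L e = hc L e"
      using eA unfolding ed H seg1_def seg2_def by auto
    have p: "reach (succ L A) (succ L A (hb L e)) (hb L e)" using period[OF fm hb_in[OF L e]] .
    show ?thesis unfolding same_loop_reach[OF L s1] S_def unfolding 1
      using reach_stepl[of "succ L A" "hb L e" "hc L e"]
        reach_trans[OF p, of "hc L e"] by blast
  next
    case V
    have 1: "seg1 L e = hb L e" "seg2 L e = succ L A (hc L e)"
      using eA ij unfolding ed V seg1_def seg2_def by (auto simp: coord m1 m2)
    have p: "reach (succ L A) (succ L A (hc L e)) (hc L e)" using period[OF fm hc_in[OF L e]] .
    show ?thesis unfolding same_loop_reach[OF L s1] S_def unfolding 1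
      using reach_stepr[of "succ L A" "hb L e" "hc L e"]
        reach_trans[OF _ p, of "hb L e"] by blast
  qed
qed




fun T :: "nat \<Rightarrow> edge \<Rightarrow> edge" where
  "T L (v, H) = (rt L v, V)" | "T L (v, V) = (up L v, H)"
fun Tinv :: "nat \<Rightarrow> edge \<Rightarrow> edge" where
  "Tinv L (v, V) = (shift_left L v, H)" | "Tinv L (v, H) = (shift_down L v, V)"

fun psi :: "nat \<Rightarrow> corner \<Rightarrow> corner" where
  "psi L (f, SW) = (f, NE)" | "psi L (f, SE) = (rt L f, NW)"
| "psi L (f, NE) = (rt L (up L f), SW)" | "psi L (f, NW) = (up L f, SE)"
fun psiinv :: "nat \<Rightarrow> corner \<Rightarrow> corner" where
  "psiinv L (f, NE) = (f, SW)" | "psiinv L (f, NW) = (shift_left L f, SE)"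
| "psiinv L (f, SW) = (shift_left L (shift_down L f), NE)" | "psiinv L (f, SE) = (shift_down L f, NW)"

definition D :: "nat \<Rightarrow> edge set \<Rightarrow> edge set" where
  "D L A = T L ` (torus_edges L - A)"

lemma T_in: "L \<ge> 1 \<Longrightarrow> e \<in> torus_edges L \<Longrightarrow> T L e \<in> torus_edges L"
  by (cases e, cases "snd e") (auto simp: coord)
lemma Tinv_in: "L \<ge> 1 \<Longrightarrow> e \<in> torus_edges L \<Longrightarrow> Tinv L e \<in> torus_edges L"
  by (cases e, cases "snd e") (auto simp: coord)
lemma Tinv_T: "L \<ge> 1 \<Longrightarrow> e \<in> torus_edges L \<Longrightarrow> Tinv L (T L e) = e"
  by (cases e, cases "snd e") (auto simp: coord m1 m2)
lemma T_Tinv: "L \<ge> 1 \<Longrightarrow> e \<in> torus_edges L \<Longrightarrow> T L (Tinv L e) = e"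
  by (cases e, cases "snd e") (auto simp: coord m1 m2)
lemma T_inj: "L \<ge> 1 \<Longrightarrow> inj_on (T L) (torus_edges L)"
  by (metis inj_onI Tinv_T)
lemma T_bij: "L \<ge> 1 \<Longrightarrow> bij_betw (T L) (torus_edges L) (torus_edges L)"
  by (rule bij_betw_byWitness[where f'="Tinv L"]) (auto simp: Tinv_T T_Tinv T_in Tinv_in)

lemma TD: assumes L: "L \<ge> 1" and e: "e \<in> torus_edges L"
  shows "T L e \<in> D L A \<longleftrightarrow> e \<notin> A"
  using e T_inj[OF L] unfolding D_def by (auto simp: inj_on_eq_iff)

lemma psi_in: "L \<ge> 1 \<Longrightarrow> p \<in> corners L \<Longrightarrow> psi L p \<in> corners L"
  by (cases p, cases "snd p") (auto simp: coord)
lemma psiinv_psi: "L \<ge> 1 \<Longrightarrow> p \<in> corners L \<Longrightarrow> psiinv L (psi L p) = p"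
  by (cases p, cases "snd p") (auto simp: coord m1 m2)
lemma psi_inj: "L \<ge> 1 \<Longrightarrow> inj_on (psi L) (corners L)"
  by (metis inj_onI psiinv_psi)

lemma succ_dual: assumes L: "L \<ge> 1" and hyp: "\<forall>e\<in>torus_edges L. (T L e \<in> A') = (e \<notin> A)"
  and p: "p \<in> corners L"
  shows "succ L A' (psi L (succ L A p)) = psi L p"
proof -
  obtain i j q where pq: "p = ((i, j), q)" by (metis prod.exhaust)
  have ij: "i < L" "j < L" using p unfolding pq coord by auto
  show ?thesis
  proof (cases q)
    case SW
    have h: "(T L ((i,j),V) \<in> A') = (((i,j),V) \<notin> A)" using hyp[rule_format, of "((i,j),V)"] ij by (auto simp: coord)
    show ?thesis using h ij unfolding pq SW by (auto simp: coord m1 m2)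
  next
    case SE
    have h: "(T L ((i,j),H) \<in> A') = (((i,j),H) \<notin> A)" using hyp[rule_format, of "((i,j),H)"] ij by (auto simp: coord)
    show ?thesis using h ij unfolding pq SE by (auto simp: coord m1 m2)
  next
    case NE
    have h: "(T L (rt L (i,j),V) \<in> A') = ((rt L (i,j),V) \<notin> A)" using hyp[rule_format, of "(rt L (i,j),V)"] ij by (auto simp: coord)
    show ?thesis using h ij unfolding pq NE by (auto simp: coord m1 m2)
  next
    case NW
    have h: "(T L (up L (i,j),H) \<in> A') = ((up L (i,j),H) \<notin> A)" using hyp[rule_format, of "(up L (i,j),H)"] ij by (auto simp: coord)
    show ?thesis using h ij unfolding pq NW by (auto simp: coord m1 m2)
  qed
qed

lemma S_dual: assumes L: "L \<ge> 1" and e: "e \<in> torus_edges L"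
  shows "S L (D L A) (T L e) \<longleftrightarrow> S L A e"
proof -
  have hyp: "\<forall>e\<in>torus_edges L. (T L e \<in> D L A) = (e \<notin> A)" using TD[OF L] by blast
  note fm = fin_corners maps[OF L, of A] succ_inj[OF L, of A]
  have gd: "\<forall>p\<in>corners L. succ L (D L A) (psi L (succ L A p)) = psi L p"
    using succ_dual[OF L hyp] by blast
  note da = dual_abs[OF fm psi_inj[OF L] gd]
  note si = reach_succ_iff[OF fm hb_in[OF L e] hc_in[OF L e]]
  note si2 = reach_succ_iff[OF fm hc_in[OF L e] hb_in[OF L e]]
  note sy = reach_sym_iff[OF L hb_in[OF L e] hc_in[OF L e], of A]
  obtain a b d where ed: "e = ((a, b), d)" by (metis prod.exhaust)
  have ij: "a < L" "b < L" using e unfolding ed coord by auto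
  show ?thesis
  proof (cases d)
    case H
    define x where "x = (shift_down L (a,b), NE)"
    define y where "y = ((a,b), SW)"
    have xy: "x \<in> corners L" "y \<in> corners L" using ij unfolding x_def y_def by (auto simp: coord)
    have 1: "hb L (T L e) = psi L x" "hc L (T L e) = psi L y"
      using ij unfolding ed H x_def y_def by (auto simp: coord m1 m2)
    have 2: "S L (D L A) (T L e) \<longleftrightarrow> reach (succ L A) y x"
      unfolding S_def 1 using da[OF xy] .
    show ?thesis
    proof (cases "e \<in> A")
      case True
      have "succ L A (hb L e) = y" "succ L A (hc L e) = x"
        using True ij unfolding ed H x_def y_def by (auto simp: coord m1 m2)
      then show ?thesis using 2 si unfolding S_def by simp
    next
      case False
      have "succ L A (hb L e) = x" "succ L A (hc L e) = y"
        using False ij unfolding ed H x_def y_def by (auto simp: coord m1 m2)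
      then show ?thesis using 2 si2 sy unfolding S_def by simp
    qed
  next
    case V
    define x where "x = ((a,b), NW)"
    define y where "y = (shift_left L (a,b), SE)"
    have xy: "x \<in> corners L" "y \<in> corners L" using ij unfolding x_def y_def by (auto simp: coord)
    have 1: "hb L (T L e) = psi L x" "hc L (T L e) = psi L y"
      using ij unfolding ed V x_def y_def by (auto simp: coord m1 m2)
    have 2: "S L (D L A) (T L e) \<longleftrightarrow> reach (succ L A) y x"
      unfolding S_def 1 using da[OF xy] .
    show ?thesis
    proof (cases "e \<in> A")
      case True
      have "succ L A (hb L e) = x" "succ L A (hc L e) = y"
        using True ij unfolding ed V x_def y_def by (auto simp: coord m1 m2)
      then show ?thesis using 2 si2 sy unfolding S_def by simp
    next
      case False
      have "succ L A (hb L e) = y" "succ L A (hc L e) = x"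
        using False ij unfolding ed V x_def y_def by (auto simp: coord m1 m2)
      then show ?thesis using 2 si unfolding S_def by simp
    qed
  qed
qed




lemma card_bij_filter: assumes "bij_betw f X Y"
  shows "card {x\<in>X. Q (f x)} = card {y\<in>Y. Q y}"
proof -
  have "bij_betw f {x\<in>X. Q (f x)} {y\<in>Y. Q y}"
    using assms unfolding bij_betw_def inj_on_def by auto
  then show ?thesis by (rule bij_betw_same_card)
qed

definition Dinv :: "nat \<Rightarrow> edge set \<Rightarrow> edge set" where
  "Dinv L A' = torus_edges L - Tinv L ` A'"

lemma D_bij: assumes L: "L \<ge> 1"
  shows "bij_betw (D L) (Pow (torus_edges L)) (Pow (torus_edges L))"
proof (rule bij_betw_byWitness[where f'="Dinv L"])
  let ?E = "torus_edges L"
  show "\<forall>A\<in>Pow ?E. Dinv L (D L A) = A"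
  proof
    fix A assume A: "A \<in> Pow ?E"
    have "Tinv L ` T L ` (?E - A) = ?E - A"
      using Tinv_T[OF L] by (force simp: image_image)
    then show "Dinv L (D L A) = A" unfolding Dinv_def D_def using A by auto
  qed
  show "\<forall>A\<in>Pow ?E. D L (Dinv L A) = A"
  proof
    fix A assume A: "A \<in> Pow ?E"
    have "Tinv L ` A \<subseteq> ?E" using A Tinv_in[OF L] by auto
    then have "?E - (?E - Tinv L ` A) = Tinv L ` A" by auto
    moreover have "T L ` Tinv L ` A = A" using A T_Tinv[OF L] by (force simp: image_image)
    ultimately show "D L (Dinv L A) = A" unfolding Dinv_def D_def by simp
  qed
  show "D L ` Pow ?E \<subseteq> Pow ?E" unfolding D_def using T_in[OF L] by auto
  show "Dinv L ` Pow ?E \<subseteq> Pow ?E" unfolding Dinv_def by auto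
qed

lemma step_dual: assumes L: "L \<ge> 1" and e: "e \<in> torus_edges L"
  shows "card {A\<in>Pow (torus_edges L). e \<in> A \<and> S L A e}
       = card {A\<in>Pow (torus_edges L). T L e \<notin> A \<and> S L A (T L e)}"
proof -
  have "{A\<in>Pow (torus_edges L). e \<in> A \<and> S L A e}
      = {A\<in>Pow (torus_edges L). T L e \<notin> D L A \<and> S L (D L A) (T L e)}"
    using TD[OF L e] S_dual[OF L e] by auto
  then show ?thesis using card_bij_filter[OF D_bij[OF L], of "\<lambda>A'. T L e \<notin> A' \<and> S L A' (T L e)"]
    by simp
qed

lemma step_toggle: assumes L: "L \<ge> 1" and e: "e \<in> torus_edges L"
  shows "card {A\<in>Pow (torus_edges L). e \<notin> A \<and> S L A e}
       = card {B\<in>Pow (torus_edges L). e \<in> B \<and> \<not> S L B e}"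
proof -
  have "bij_betw (insert e) {A\<in>Pow (torus_edges L). e \<notin> A \<and> S L A e}
        {B\<in>Pow (torus_edges L). e \<in> B \<and> \<not> S L B e}"
  proof (rule bij_betw_byWitness[where f'="\<lambda>B. B - {e}"])
    show "\<forall>A\<in>{A \<in> Pow (torus_edges L). e \<notin> A \<and> S L A e}. insert e A - {e} = A" by auto
    show "\<forall>B\<in>{B \<in> Pow (torus_edges L). e \<in> B \<and> \<not> S L B e}. insert e (B - {e}) = B" by auto
    show "insert e ` {A \<in> Pow (torus_edges L). e \<notin> A \<and> S L A e}
        \<subseteq> {B \<in> Pow (torus_edges L). e \<in> B \<and> \<not> S L B e}"
      using S_toggle[OF L e] e by auto
    show "(\<lambda>B. B - {e}) ` {B \<in> Pow (torus_edges L). e \<in> B \<and> \<not> S L B e}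
        \<subseteq> {A \<in> Pow (torus_edges L). e \<notin> A \<and> S L A e}"
    proof
      fix x assume "x \<in> (\<lambda>B. B - {e}) ` {B \<in> Pow (torus_edges L). e \<in> B \<and> \<not> S L B e}"
      then obtain B where B: "B \<in> Pow (torus_edges L)" "e \<in> B" "\<not> S L B e" "x = B - {e}" by blast
      have "insert e x = B" using B by auto
      then have "S L x e" using S_toggle[OF L e, of x] B by auto
      then show "x \<in> {A \<in> Pow (torus_edges L). e \<notin> A \<and> S L A e}" using B by auto
    qed
  qed
  then show ?thesis by (rule bij_betw_same_card)
qed

lemma N1_eq: assumes L: "L \<ge> 1" and A: "A \<subseteq> torus_edges L"
  shows "N1 L A = card {e \<in> A. S L A e}" "N2 L A = card {e \<in> A. \<not> S L A e}"
proof -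
  have "\<And>e. e \<in> A \<Longrightarrow> same_loop L A (seg1 L e) (seg2 L e) \<longleftrightarrow> S L A e"
    using N_S[OF L] A by blast
  then show "N1 L A = card {e \<in> A. S L A e}" "N2 L A = card {e \<in> A. \<not> S L A e}"
    unfolding N1_def N2_def by (metis (mono_tags, lifting))+
qed

lemma card_filter_sum: assumes "finite E" "A \<subseteq> E"
  shows "card {e \<in> A. Q e} = (\<Sum>e\<in>E. if e \<in> A \<and> Q e then 1 else 0)"
proof -
  have "{e \<in> A. Q e} = {e \<in> E. e \<in> A \<and> Q e}" using assms by auto
  then show ?thesis using assms(1) by (simp add: sum.inter_filter[symmetric])
qed

lemma sum_card_filter: assumes "finite P"
  shows "(\<Sum>A\<in>P. (if Q A then 1 else 0 :: nat)) = card {A\<in>P. Q A}"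
  using assms by (simp add: sum.inter_filter[symmetric])

lemma sumN: assumes L: "L \<ge> 1"
  shows "(\<Sum>A\<in>Pow (torus_edges L). N1 L A) = (\<Sum>e\<in>torus_edges L. card {A\<in>Pow (torus_edges L). e \<in> A \<and> S L A e})"
    "(\<Sum>A\<in>Pow (torus_edges L). N2 L A) = (\<Sum>e\<in>torus_edges L. card {A\<in>Pow (torus_edges L). e \<in> A \<and> \<not> S L A e})"
proof -
  let ?E = "torus_edges L" and ?P = "Pow (torus_edges L)"
  have fP: "finite ?P" using fin_edges by simp
  have "(\<Sum>A\<in>?P. N1 L A) = (\<Sum>A\<in>?P. \<Sum>e\<in>?E. if e \<in> A \<and> S L A e then 1 else 0)"
    using N1_eq[OF L] card_filter_sum[OF fin_edges] by (intro sum.cong) auto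
  also have "\<dots> = (\<Sum>e\<in>?E. \<Sum>A\<in>?P. if e \<in> A \<and> S L A e then 1 else 0)" by (rule sum.swap)
  also have "\<dots> = (\<Sum>e\<in>?E. card {A\<in>?P. e \<in> A \<and> S L A e})"
    using sum_card_filter[OF fP] by simp
  finally show "(\<Sum>A\<in>?P. N1 L A) = (\<Sum>e\<in>?E. card {A\<in>?P. e \<in> A \<and> S L A e})" .
  have "(\<Sum>A\<in>?P. N2 L A) = (\<Sum>A\<in>?P. \<Sum>e\<in>?E. if e \<in> A \<and> \<not> S L A e then 1 else 0)"
    using N1_eq[OF L] card_filter_sum[OF fin_edges] by (intro sum.cong) auto
  also have "\<dots> = (\<Sum>e\<in>?E. \<Sum>A\<in>?P. if e \<in> A \<and> \<not> S L A e then 1 else 0)" by (rule sum.swap)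
  also have "\<dots> = (\<Sum>e\<in>?E. card {A\<in>?P. e \<in> A \<and> \<not> S L A e})"
    using sum_card_filter[OF fP] by simp
  finally show "(\<Sum>A\<in>?P. N2 L A) = (\<Sum>e\<in>?E. card {A\<in>?P. e \<in> A \<and> \<not> S L A e})" .
qed

lemma sumN_eq: assumes L: "L \<ge> 1"
  shows "(\<Sum>A\<in>Pow (torus_edges L). N1 L A) = (\<Sum>A\<in>Pow (torus_edges L). N2 L A)"
proof -
  let ?E = "torus_edges L" and ?P = "Pow (torus_edges L)"
  let ?g = "\<lambda>e. card {A\<in>?P. e \<in> A \<and> \<not> S L A e}"
  have "(\<Sum>e\<in>?E. card {A\<in>?P. e \<in> A \<and> S L A e}) = (\<Sum>e\<in>?E. ?g (T L e))"
    using step_dual[OF L] step_toggle[OF L] T_in[OF L] by (intro sum.cong) auto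
  also have "\<dots> = (\<Sum>e\<in>?E. ?g e)" by (rule sum.reindex_bij_betw[OF T_bij[OF L]])
  finally show ?thesis using sumN[OF L] by simp
qed

lemma N12: assumes L: "L \<ge> 1" and A: "A \<subseteq> torus_edges L"
  shows "N1 L A + N2 L A = card A"
proof -
  have fA: "finite A" using A fin_edges finite_subset by blast
  have "card {e \<in> A. S L A e} + card {e \<in> A. \<not> S L A e} = card ({e \<in> A. S L A e} \<union> {e \<in> A. \<not> S L A e})"
    using fA by (intro card_Un_disjoint[symmetric]) auto
  also have "{e \<in> A. S L A e} \<union> {e \<in> A. \<not> S L A e} = A" by auto
  finally show ?thesis using N1_eq[OF L A] by simp
qed

lemma sum_card: "finite E \<Longrightarrow> 2 * (\<Sum>A\<in>Pow E. card A) = card E * card (Pow E)"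
proof -
  assume fE: "finite E"
  have bij: "bij_betw (\<lambda>A. E - A) (Pow E) (Pow E)"
    by (rule bij_betw_byWitness[where f'="\<lambda>A. E - A"]) auto
  have "(\<Sum>A\<in>Pow E. card A) = (\<Sum>A\<in>Pow E. card (E - A))"
    using sum.reindex_bij_betw[OF bij, of card] by simp
  also have "\<dots> = (\<Sum>A\<in>Pow E. card E - card A)"
    using fE by (intro sum.cong) (auto simp: card_Diff_subset finite_subset)
  finally have "(\<Sum>A\<in>Pow E. card A) + (\<Sum>A\<in>Pow E. card A) = (\<Sum>A\<in>Pow E. card E - card A) + (\<Sum>A\<in>Pow E. card A)"
    by simp
  also have "\<dots> = (\<Sum>A\<in>Pow E. card E - card A + card A)" by (simp add: sum.distrib)
  also have "\<dots> = (\<Sum>A\<in>Pow E. card E)"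
    using fE by (intro sum.cong) (auto simp: card_mono)
  finally show ?thesis by (simp add: mult.commute)
qed




theorem lemma1:
  fixes L :: nat
  assumes "L \<ge> 1"
  shows "measure_pmf.expectation (perc_half L)
           (\<lambda>A. real (N1 L A) / real (card (torus_edges L))) = 1 / 4
       \<and> measure_pmf.expectation (perc_half L)
           (\<lambda>A. real (N2 L A) / real (card (torus_edges L))) = 1 / 4"
proof -
  note L = assms
  let ?E = "torus_edges L" and ?P = "Pow (torus_edges L)"
  define m where "m = card ?E"
  define s1 where "s1 = (\<Sum>A\<in>?P. N1 L A)"
  define s2 where "s2 = (\<Sum>A\<in>?P. N2 L A)"
  have fE: "finite ?E" by (rule fin_edges)
  have fP: "finite ?P" using fE by simp
  have neP: "?P \<noteq> {}" by auto
  have "((0,0),H) \<in> ?E" using L unfolding coord by auto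
  then have mpos: "m > 0" unfolding m_def using fE card_gt_0_iff by blast
  have s12: "s1 = s2" unfolding s1_def s2_def by (rule sumN_eq[OF L])
  have "s1 + s2 = (\<Sum>A\<in>?P. card A)" unfolding s1_def s2_def sum.distrib[symmetric]
    using N12[OF L] by (intro sum.cong) auto
  then have "4 * s1 = m * card ?P" using sum_card[OF fE] s12 unfolding m_def by simp
  then have "real (4 * s1) = real (m * card ?P)" by (rule arg_cong)
  then have r: "4 * real s1 = real m * real (card ?P)" by (simp only: of_nat_mult of_nat_numeral)
  have cP: "real (card ?P) > 0" using fP neP card_gt_0_iff by auto
  have ex: "measure_pmf.expectation (perc_half L) (\<lambda>A. real (N L A) / real m) = real (\<Sum>A\<in>?P. N L A) / real m / real (card ?P)"
    for N :: "nat \<Rightarrow> edge set \<Rightarrow> nat"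
    unfolding perc_half_def integral_pmf_of_set[OF neP fP]
    by (simp add: sum_divide_distrib[symmetric])
  have q: "real s1 / real m / real (card ?P) = 1/4"
    using r mpos cP by (simp add: field_simps)
  have e1: "measure_pmf.expectation (perc_half L) (\<lambda>A. real (N1 L A) / real m) = 1/4"
    unfolding ex[of N1] s1_def[symmetric] by (rule q)
  have e2: "measure_pmf.expectation (perc_half L) (\<lambda>A. real (N2 L A) / real m) = 1/4"
    unfolding ex[of N2] s2_def[symmetric] s12[symmetric] by (rule q)
  show ?thesis using e1 e2 unfolding m_def by (rule conjI)
qed


end
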